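(* The class $\mathcal{D}^-$ has the following properties. (a) If $X_n\in\mathcal{D}^-$ for all $n\in\mathbb{N}$ and $X_n$ converges in distribution to $X$, then $X\in\mathcal{D}^-$. (b) If $X\in\mathcal{D}^-$ is non-degenerate (not almost surely constant), then $E|X|=\infty$. (c) If $X\in\mathcal{D}^-$, then $aX+b\in\mathcal{D}^-$ for all $a>0$ and $b\in\mathbb{R}$. (d) If $X,Y\in\mathcal{D}^-$ are independent, then $X+Y\in\mathcal{D}^-$. (e) If $X,Y\in\mathcal{D}^-$ are independent, then $\max\{X,Y\}\in\mathcal{D}^-$. (f) If $X\in\mathcal{D}^-$ and $\phi:\mathbb{R}\to\mathbb{R}$ is non-decreasing and convex, then $\phi(X)\in\mathcal{D}^-$.
   Context: For real random variables, $X \le_{st} Y$ means $P(X\le t)\ge P(Y\le t)$ for all $t\in\mathbb{R}$. A real random variable $X$ (equivalently its distribution function $F_X$) belongs to $\mathcal{D}^-$ if for every $n\in\mathbb{N}$, all $\theta_1,\dots,\theta_n\ge 0$ with $\sum_{i=1}^n\theta_i=1$, and i.i.d. random variables $X_1,\dots,X_n$ with distribution $F_X$, we have $X_1\le_{st}\sum_{i=1}^n\theta_iX_i$. *)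

theory Defs
  imports "HOL-Probability.Probability"
begin

text \<open>For i.i.d. X_1,...,X_n with law mu, the law of sum theta_i X_i is the image of the
  product measure mu^n under the map x |-> sum theta_i x_i.
  X_1 <=_st S means P(X_1 <= t) >= P(S <= t) for all t.\<close>

definition D_minus :: "real measure \<Rightarrow> bool" where
  "D_minus \<mu> \<longleftrightarrow> real_distribution \<mu> \<and>
     (\<forall>(n::nat) (\<theta>::nat \<Rightarrow> real).
        (\<forall>i<n. 0 \<le> \<theta> i) \<and> (\<Sum>i<n. \<theta> i) = 1 \<longrightarrow>
        (\<forall>t::real.
           measure (distr (PiM {..<n} (\<lambda>_. \<mu>)) borel (\<lambda>x. \<Sum>i<n. \<theta> i * x i)) {..t}
           \<le> measure \<mu> {..t}))"

definition D_minus_rv :: "'a measure \<Rightarrow> ('a \<Rightarrow> real) \<Rightarrow> bool" where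
  "D_minus_rv M X \<longleftrightarrow> D_minus (distr M borel X)"

end

theory Submission
  imports Defs
begin

definition Slaw :: "real measure \<Rightarrow> nat \<Rightarrow> (nat \<Rightarrow> real) \<Rightarrow> real measure" where
  "Slaw \<mu> n \<theta> = distr (PiM {..<n} (\<lambda>_. \<mu>)) borel (\<lambda>x. \<Sum>i<n. \<theta> i * x i)"

lemma D_minus_Slaw: "D_minus \<mu> \<longleftrightarrow> real_distribution \<mu> \<and>
     (\<forall>(n::nat) (\<theta>::nat \<Rightarrow> real). (\<forall>i<n. 0 \<le> \<theta> i) \<and> (\<Sum>i<n. \<theta> i) = 1 \<longrightarrow>
        (\<forall>t. measure (Slaw \<mu> n \<theta>) {..t} \<le> measure \<mu> {..t}))"
  unfolding D_minus_def Slaw_def by simp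

lemma sum1_nonempty: "(\<Sum>i<n. (\<theta>::nat\<Rightarrow>real) i) = 1 \<Longrightarrow> n \<noteq> 0"
  by (cases n) auto

lemma coords_indep:
  assumes "finite I" "\<And>i. i \<in> I \<Longrightarrow> prob_space (M i)" and False: "I \<noteq> {}"
  shows "prob_space.indep_vars (PiM I M) M (\<lambda>i x. x i) I"
proof -
  interpret P: prob_space "PiM I M" using assms by (intro prob_space_PiM) auto
  have "distr (PiM I M) (PiM I M) (\<lambda>x. \<lambda>i\<in>I. x i) = distr (PiM I M) (PiM I M) (\<lambda>x. x)"
    by (intro distr_cong) (auto simp: space_PiM PiE_def extensional_def fun_eq_iff)
  also have "\<dots> = PiM I M" by simp
  also have "\<dots> = PiM I (\<lambda>i. distr (PiM I M) (M i) (\<lambda>x. x i))"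
    by (intro PiM_cong refl distr_PiM_component[symmetric]) (auto simp: assms)
  finally show ?thesis
    by (subst P.indep_vars_iff_distr_eq_PiM'[OF False]) auto
qed

lemma iid_law:
  assumes "prob_space \<Omega>" "n \<noteq> 0"
    and ind: "prob_space.indep_vars \<Omega> (\<lambda>_. borel) Z {..<n}"
    and Zm: "\<And>i. i < n \<Longrightarrow> Z i \<in> borel_measurable \<Omega>"
    and law: "\<And>i. i < n \<Longrightarrow> distr \<Omega> borel (Z i) = \<rho>"
  shows "distr \<Omega> borel (\<lambda>\<omega>. \<Sum>i<n. \<theta> i * Z i \<omega>) = Slaw \<rho> n \<theta>"
proof -
  interpret prob_space \<Omega> by fact
  have ne: "{..<n} \<noteq> {}" using assms by auto
  have eq: "distr \<Omega> (PiM {..<n} (\<lambda>_. borel)) (\<lambda>x. \<lambda>i\<in>{..<n}. Z i x) = PiM {..<n} (\<lambda>i. distr \<Omega> borel (Z i))"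
    using ind by (subst (asm) indep_vars_iff_distr_eq_PiM'[OF ne]) (auto simp: Zm)
  have "PiM {..<n} (\<lambda>i. distr \<Omega> borel (Z i)) = PiM {..<n} (\<lambda>_. \<rho>)"
    by (intro PiM_cong) (auto simp: law)
  have m: "(\<lambda>x. \<lambda>i\<in>{..<n}. Z i x) \<in> measurable \<Omega> (PiM {..<n} (\<lambda>_. borel))"
    by (intro measurable_restrict) (auto simp: Zm)
  have "distr \<Omega> borel (\<lambda>\<omega>. \<Sum>i<n. \<theta> i * Z i \<omega>) =
     distr (distr \<Omega> (PiM {..<n} (\<lambda>_. borel)) (\<lambda>x. \<lambda>i\<in>{..<n}. Z i x)) borel (\<lambda>x. \<Sum>i<n. \<theta> i * x i)"
    by (subst distr_distr[OF _ m]) (auto simp: comp_def)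
  also have "\<dots> = Slaw \<rho> n \<theta>"
    unfolding eq \<open>PiM {..<n} (\<lambda>i. distr \<Omega> borel (Z i)) = PiM {..<n} (\<lambda>_. \<rho>)\<close> Slaw_def
    by (intro distr_cong) (auto simp: sets_PiM_cong)
  finally show ?thesis .
qed

lemma lim_left:
  assumes "real_distribution \<nu>"
  shows "(\<lambda>j. measure \<nu> {..s - 1/Suc j}) \<longlonglongrightarrow> measure \<nu> {..<(s::real)}"
proof -
  interpret real_distribution \<nu> by fact
  have "(\<lambda>j. measure \<nu> ((\<lambda>j. {..s - 1/Suc j}) j)) \<longlonglongrightarrow> measure \<nu> (\<Union>j. {..s - 1/Suc j})"
  proof (rule finite_Lim_measure_incseq)
    show "incseq (\<lambda>j. {..s - 1/Suc j})"
      by (auto simp: incseq_def frac_le intro: order_trans)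
  qed auto
  also have "(\<Union>j. {..s - 1/Suc j}) = {..<s}"
  proof (rule set_eqI)
    fix x
    have "x \<in> (\<Union>j. {..s - 1/Suc j})" if "x < s"
    proof -
      from that obtain j where "1 / Suc j < s - x"
        by (metis diff_gt_0_iff_gt nat_approx_posE)
      then have "x \<le> s - 1/Suc j" by linarith
      then show "x \<in> (\<Union>j. {..s - 1/Suc j})" by blast
    qed
    moreover have "x < s" if "x \<le> s - 1/Suc j" for j
    proof -
      have "0 < 1 / real (Suc j)" by simp
      then show ?thesis using that by linarith
    qed
    ultimately show "x \<in> (\<Union>j. {..s - 1/Suc j}) \<longleftrightarrow> x \<in> {..<s}" by auto
  qed
  finally show ?thesis .
qed

lemma lim_right:
  assumes "real_distribution \<nu>"
  shows "(\<lambda>j. measure \<nu> {..s + 1/Suc j}) \<longlonglongrightarrow> measure \<nu> {..(s::real)}"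
proof -
  interpret real_distribution \<nu> by fact
  have "(\<lambda>j. measure \<nu> ((\<lambda>j. {..s + 1/Suc j}) j)) \<longlonglongrightarrow> measure \<nu> (\<Inter>j. {..s + 1/Suc j})"
  proof (rule finite_Lim_measure_decseq)
    show "decseq (\<lambda>j. {..s + 1/Suc j})"
      by (auto simp: decseq_def frac_le intro: order_trans)
  qed auto
  also have "(\<Inter>j. {..s + 1/Suc j}) = {..s}"
  proof (rule set_eqI)
    fix x
    have "x \<le> s" if h: "\<And>j. x \<le> s + 1 / Suc j"
    proof (rule ccontr)
      assume "\<not> x \<le> s"
      then obtain j where "1 / Suc j < x - s"
        by (metis diff_gt_0_iff_gt nat_approx_posE not_le)
      with h[of j] show False by auto
    qed
    moreover have "x \<le> s + 1/Suc j" if "x \<le> s" for j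
    proof -
      have "0 < 1 / real (Suc j)" by simp
      then show ?thesis using that by linarith
    qed
    ultimately show "x \<in> (\<Inter>j. {..s + 1/Suc j}) \<longleftrightarrow> x \<in> {..s}" by auto
  qed
  finally show ?thesis .
qed

lemma st_downset:
  assumes A: "real_distribution \<alpha>" and B: "real_distribution \<beta>"
    and le: "\<And>t. measure \<alpha> {..t} \<le> measure \<beta> {..t}"
    and down: "\<And>x y. y \<le> x \<Longrightarrow> x \<in> D \<Longrightarrow> y \<in> (D::real set)"
  shows "measure \<alpha> D \<le> measure \<beta> D"
proof -
  interpret a: real_distribution \<alpha> by fact
  interpret b: real_distribution \<beta> by fact
  show ?thesis
  proof (cases "D = {}")
    case True then show ?thesis by simp
  next
    case ne: False
    show ?thesis
    proof (cases "bdd_above D")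
      case False
      have "D = UNIV"
      proof -
        have "x \<in> D" for x
        proof -
          from False obtain y where "y \<in> D" "\<not> y \<le> x" unfolding bdd_above_def by auto
          then show "x \<in> D" using down[of x y] by auto
        qed
        then show ?thesis by auto
      qed
      then show ?thesis using a.prob_space b.prob_space by simp
    next
      case True
      define s where "s = Sup D"
      show ?thesis
      proof (cases "s \<in> D")
        case True
        have "D = {..s}"
          using True \<open>bdd_above D\<close> down s_def by (auto intro: cSup_upper)
        then show ?thesis using le by simp
      next
        case False
        have "D = {..<s}"
        proof safe
          fix x assume "x \<in> D"
          then have "x \<le> s" using \<open>bdd_above D\<close> s_def by (auto intro: cSup_upper)
          then show "x < s" using False \<open>x \<in> D\<close> by (cases "x = s") auto
        next
          fix x assume "x < s"
          then obtain y where "y \<in> D" "x < y" using less_cSup_iff[OF ne \<open>bdd_above D\<close>] s_def by auto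
          then show "x \<in> D" using down[of x y] by (meson less_imp_le)
        qed
        have "measure \<alpha> {..<s} \<le> measure \<beta> {..<s}"
          by (rule LIMSEQ_le[OF lim_left[OF A] lim_left[OF B]]) (auto intro: le)
        then show ?thesis using \<open>D = {..<s}\<close> by simp
      qed
    qed
  qed
qed

lemma Slaw_distr:
  assumes "prob_space \<mu>" "n \<noteq> 0" and g: "g \<in> measurable \<mu> borel"
  shows "Slaw (distr \<mu> borel g) n \<theta> = distr (PiM {..<n} (\<lambda>_. \<mu>)) borel (\<lambda>x. \<Sum>i<n. \<theta> i * g (x i))"
proof -
  let ?P = "PiM {..<n} (\<lambda>_. \<mu>)"
  interpret P: prob_space ?P by (intro prob_space_PiM) (simp add: assms)
  have ind: "P.indep_vars (\<lambda>_. \<mu>) (\<lambda>i x. x i) {..<n}"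
    by (rule coords_indep) (use assms in auto)
  have ind2: "P.indep_vars (\<lambda>_. borel) (\<lambda>i x. g (x i)) {..<n}"
    by (rule P.indep_vars_compose2[OF ind]) (simp add: g)
  have cm: "(\<lambda>x. x i) \<in> measurable ?P \<mu>" if "i < n" for i
    using that by simp
  have Zm: "(\<lambda>x. g (x i)) \<in> borel_measurable ?P" if "i < n" for i
      using measurable_compose[OF cm[OF that] g] .
  have law: "distr ?P borel (\<lambda>x. g (x i)) = distr \<mu> borel g" if "i < n" for i
    proof -
      have "distr ?P borel (\<lambda>x. g (x i)) = distr (distr ?P \<mu> (\<lambda>x. x i)) borel g"
        by (subst distr_distr[OF g cm[OF that]]) (simp add: comp_def)
      also have "distr ?P \<mu> (\<lambda>x. x i) = \<mu>"
        by (rule distr_PiM_component) (use assms that in auto)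
      finally show ?thesis .
    qed
  show ?thesis
    using iid_law[OF P.prob_space_axioms \<open>n \<noteq> 0\<close> ind2 Zm law, of \<theta>] by (rule sym)
qed

lemma down_mono:
  assumes "mono (g::real\<Rightarrow>real)" "y \<le> x" "x \<in> {z. g z \<le> t}"
  shows "y \<in> {z. g z \<le> t}"
proof -
  have "g y \<le> g x" by (rule monoD[OF assms(1,2)])
  then show ?thesis using assms(3) by simp
qed

lemma part_f:
  assumes D: "D_minus \<mu>" and mono: "mono g" and cvx: "convex_on UNIV g"
  shows "D_minus (distr \<mu> borel g)"
proof -
  have rd: "real_distribution \<mu>" using D by (simp add: D_minus_def)
  interpret real_distribution \<mu> by fact
  have g[measurable]: "g \<in> borel_measurable borel" using mono by (rule borel_measurable_mono)
  have gm: "g \<in> measurable \<mu> borel" using g measurable_cong_sets[of \<mu> borel borel borel] by simp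
  have rd': "real_distribution (distr \<mu> borel g)"
    by (auto simp: real_distribution_def real_distribution_axioms_def gm prob_space_distr)
  show ?thesis
    unfolding D_minus_Slaw
  proof (intro conjI allI impI rd')
    fix n \<theta> t assume a: "(\<forall>i<n. 0 \<le> (\<theta>::nat\<Rightarrow>real) i) \<and> (\<Sum>i<n. \<theta> i) = 1"
    have n0: "n \<noteq> 0" using a sum1_nonempty by blast
    let ?P = "PiM {..<n} (\<lambda>_. \<mu>)"
    interpret P: prob_space ?P by (intro prob_space_PiM) (simp add: prob_space_axioms)
    have sP: "space ?P = {..<n} \<rightarrow>\<^sub>E UNIV" by (simp add: space_PiM)
    have "measure (Slaw (distr \<mu> borel g) n \<theta>) {..t} = measure ?P {x \<in> space ?P. (\<Sum>i<n. \<theta> i * g (x i)) \<le> t}"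
      unfolding Slaw_distr[OF prob_space_axioms n0 gm] by (subst measure_distr) (auto simp: vimage_def Int_def conj_commute)
    also have "\<dots> \<le> measure ?P {x \<in> space ?P. g (\<Sum>i<n. \<theta> i * x i) \<le> t}"
    proof (rule P.finite_measure_mono)
      show "{x \<in> space ?P. g (\<Sum>i<n. \<theta> i * x i) \<le> t} \<in> sets ?P" by measurable
      show "{x \<in> space ?P. (\<Sum>i<n. \<theta> i * g (x i)) \<le> t} \<subseteq> {x \<in> space ?P. g (\<Sum>i<n. \<theta> i * x i) \<le> t}"
      proof safe
        fix x assume "x \<in> space ?P" "(\<Sum>i<n. \<theta> i * g (x i)) \<le> t"
        moreover have "g (\<Sum>i\<in>{..<n}. \<theta> i *\<^sub>R x i) \<le> (\<Sum>i\<in>{..<n}. \<theta> i * g (x i))"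
          by (rule convex_on_sum[OF _ _ cvx]) (use a n0 in auto)
        ultimately show "g (\<Sum>i<n. \<theta> i * x i) \<le> t" by simp
      qed
    qed
    also have "\<dots> = measure (Slaw \<mu> n \<theta>) {z. g z \<le> t}"
      unfolding Slaw_def by (subst measure_distr) (auto simp: vimage_def Int_def conj_commute)
    also have "\<dots> \<le> measure \<mu> {z. g z \<le> t}"
    proof (rule st_downset[OF _ rd])
      show "real_distribution (Slaw \<mu> n \<theta>)"
        unfolding Slaw_def real_distribution_def real_distribution_axioms_def by (auto intro!: P.prob_space_distr)
      show "measure (Slaw \<mu> n \<theta>) {..s} \<le> measure \<mu> {..s}" for s
        using D a unfolding D_minus_Slaw by blast
    qed (rule down_mono[OF mono])
    also have "\<dots> = measure (distr \<mu> borel g) {..t}"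
      by (subst measure_distr) (auto simp: gm vimage_def)
    finally show "measure (Slaw (distr \<mu> borel g) n \<theta>) {..t} \<le> measure (distr \<mu> borel g) {..t}" .
  qed
qed


lemma meas_distr_le:
  assumes "f \<in> borel_measurable P"
  shows "measure (distr P borel f) {..t} = measure P {x\<in>space P. f x \<le> (t::real)}"
  using assms by (subst measure_distr) (auto simp: vimage_def Int_def conj_commute)

lemma part_f_rv:
  assumes X: "X \<in> borel_measurable M" and D: "D_minus_rv M X" and mono: "mono g" and cvx: "convex_on UNIV g"
  shows "D_minus_rv M (\<lambda>\<omega>. g (X \<omega>))"
proof -
  have g: "g \<in> borel_measurable borel" using mono by (rule borel_measurable_mono)
  have "distr M borel (\<lambda>\<omega>. g (X \<omega>)) = distr (distr M borel X) borel g"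
    by (subst distr_distr[OF g X]) (simp add: comp_def)
  then show ?thesis using part_f[OF _ mono cvx] D unfolding D_minus_rv_def by simp
qed

lemma part_c_rv:
  assumes X: "X \<in> borel_measurable M" and D: "D_minus_rv M X" and a: "0 < (a::real)"
  shows "D_minus_rv M (\<lambda>\<omega>. a * X \<omega> + b)"
proof -
  have "mono (\<lambda>x. a * x + b)" using a by (auto simp: mono_def)
  moreover have "convex_on UNIV (\<lambda>x. a * x + b)"
    by (intro convex_on_add convex_on_cmul) (use a in \<open>auto simp: convex_on_ident convex_on_const\<close>)
  ultimately show ?thesis using part_f_rv[OF X D, of "\<lambda>x. a * x + b"] by simp
qed

lemma part_a:
  assumes Dn: "\<And>k. D_minus (\<mu>s k)" and rd: "real_distribution \<mu>" and wc: "weak_conv_m \<mu>s \<mu>"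
  shows "D_minus \<mu>"
  unfolding D_minus_Slaw
proof (intro conjI allI impI rd)
  fix n \<theta> t assume a: "(\<forall>i<n. 0 \<le> (\<theta>::nat\<Rightarrow>real) i) \<and> (\<Sum>i<n. \<theta> i) = 1"
  have n0: "n \<noteq> 0" using a sum1_nonempty by blast
  have rds: "real_distribution (\<mu>s k)" for k using Dn[of k] by (simp add: D_minus_def)
  obtain \<Omega> :: "real measure" and Ys Y where
    \<Omega>: "prob_space \<Omega>" and Ysm: "\<And>k. Ys k \<in> borel_measurable \<Omega>" and
    Yslaw: "\<And>k. distr \<Omega> borel (Ys k) = \<mu>s k" and Ym': "Y \<in> measurable \<Omega> lborel" and
    Ylaw: "distr \<Omega> borel Y = \<mu>" and conv: "\<And>x. x \<in> space \<Omega> \<Longrightarrow> (\<lambda>k. Ys k x) \<longlonglongrightarrow> Y x"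
    using Skorohod[OF rds rd wc] by blast
  interpret \<Omega>: prob_space \<Omega> by fact
  have Ym: "Y \<in> borel_measurable \<Omega>" using Ym' by (simp add: measurable_cong_sets[OF refl sets_lborel])
  let ?P = "PiM {..<n} (\<lambda>_. \<Omega>)"
  interpret P: prob_space ?P by (intro prob_space_PiM) (simp add: \<Omega>)
  define S where "S k z = (\<Sum>i<n. \<theta> i * Ys k (z i))" for k z
  define Si where "Si z = (\<Sum>i<n. \<theta> i * Y (z i))" for z
  have Sm[measurable]: "S k \<in> borel_measurable ?P" for k
    unfolding S_def using Ysm by measurable
  have Sim[measurable]: "Si \<in> borel_measurable ?P"
    unfolding Si_def using Ym by measurable
  have Ysm'[measurable]: "Ys k \<in> borel_measurable \<Omega>" for k by (rule Ysm)
  have Ym''[measurable]: "Y \<in> borel_measurable \<Omega>" by (rule Ym)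
  have SlawS: "Slaw (\<mu>s k) n \<theta> = distr ?P borel (S k)" for k
    unfolding S_def using Slaw_distr[OF \<Omega> n0 Ysm, of k \<theta>] Yslaw[of k] by simp
  have SlawSi: "Slaw \<mu> n \<theta> = distr ?P borel Si"
    unfolding Si_def using Slaw_distr[OF \<Omega> n0 Ym, of \<theta>] Ylaw by simp
  have key: "measure ?P {z\<in>space ?P. S k z \<le> s} \<le> measure \<Omega> {x\<in>space \<Omega>. Ys k x \<le> s}" for k s
  proof -
    have "measure (Slaw (\<mu>s k) n \<theta>) {..s} \<le> measure (\<mu>s k) {..s}"
      using Dn[of k] a unfolding D_minus_Slaw by blast
    then show ?thesis using meas_distr_le[OF Sm, of k s] meas_distr_le[OF Ysm, of k s]
      unfolding SlawS Yslaw by simp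
  qed
  have Sconv: "(\<lambda>k. S k z) \<longlonglongrightarrow> Si z" if "z \<in> space ?P" for z
  proof -
    have "z i \<in> space \<Omega>" if "i < n" for i using \<open>z \<in> space ?P\<close> that by (auto simp: space_PiM)
    then show ?thesis unfolding S_def Si_def
      by (intro tendsto_sum tendsto_mult tendsto_const conv) auto
  qed
  have step1: "measure ?P {z\<in>space ?P. Si z < s} \<le> measure \<Omega> {x\<in>space \<Omega>. Y x \<le> s}" for s
  proof -
    define G where "G m = {z\<in>space ?P. \<forall>k\<ge>m. S k z \<le> s}" for m
    define H where "H m = {x\<in>space \<Omega>. \<exists>k\<ge>m. Ys k x \<le> s}" for m
    have Gs: "range G \<subseteq> sets ?P" unfolding G_def by auto
    have Hs: "range H \<subseteq> sets \<Omega>" unfolding H_def by auto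
    have "(\<lambda>m. measure ?P (G m)) \<longlonglongrightarrow> measure ?P (\<Union>m. G m)"
      by (rule P.finite_Lim_measure_incseq[OF Gs]) (auto simp: incseq_def G_def)
    moreover have "(\<lambda>m. measure \<Omega> (H m)) \<longlonglongrightarrow> measure \<Omega> (\<Inter>m. H m)"
      by (rule \<Omega>.finite_Lim_measure_decseq[OF Hs]) (auto simp: decseq_def H_def intro: order_trans)
    moreover have "measure ?P (G m) \<le> measure \<Omega> (H m)" for m
    proof -
      have "measure ?P (G m) \<le> measure ?P {z\<in>space ?P. S m z \<le> s}"
        by (rule P.finite_measure_mono) (auto simp: G_def)
      also have "\<dots> \<le> measure \<Omega> {x\<in>space \<Omega>. Ys m x \<le> s}" by (rule key)
      also have "\<dots> \<le> measure \<Omega> (H m)"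
        by (rule \<Omega>.finite_measure_mono) (auto simp: H_def)
      finally show ?thesis .
    qed
    ultimately have le: "measure ?P (\<Union>m. G m) \<le> measure \<Omega> (\<Inter>m. H m)"
      by (meson LIMSEQ_le)
    have "measure ?P {z\<in>space ?P. Si z < s} \<le> measure ?P (\<Union>m. G m)"
    proof (rule P.finite_measure_mono)
      show "{z \<in> space ?P. Si z < s} \<subseteq> (\<Union>m. G m)"
      proof safe
        fix z assume z: "z \<in> space ?P" "Si z < s"
        then have "eventually (\<lambda>k. S k z < s) sequentially"
          using Sconv[OF z(1)] by (rule_tac order_tendstoD) auto
        then obtain m where "\<forall>k\<ge>m. S k z < s" by (auto simp: eventually_sequentially)
        then have "z \<in> G m" using z by (auto simp: G_def less_imp_le)
        then show "z \<in> (\<Union>m. G m)" by blast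
      qed
      show "(\<Union>m. G m) \<in> sets ?P" using Gs by auto
    qed
    also note le
    also have "measure \<Omega> (\<Inter>m. H m) \<le> measure \<Omega> {x\<in>space \<Omega>. Y x \<le> s}"
    proof (rule \<Omega>.finite_measure_mono)
      show "(\<Inter>m. H m) \<subseteq> {x\<in>space \<Omega>. Y x \<le> s}"
      proof safe
        fix x assume x: "x \<in> (\<Inter>m. H m)"
        then show "x \<in> space \<Omega>" by (auto simp: H_def)
        show "Y x \<le> s"
        proof (rule ccontr)
          assume "\<not> Y x \<le> s"
          then have "eventually (\<lambda>k. s < Ys k x) sequentially"
            using conv[OF \<open>x \<in> space \<Omega>\<close>] by (rule_tac order_tendstoD) auto
          then obtain m where "\<forall>k\<ge>m. s < Ys k x" by (auto simp: eventually_sequentially)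
          moreover have "x \<in> H m" using x by auto
          ultimately show False by (auto simp: H_def)
        qed
      qed
    qed auto
    finally show ?thesis .
  qed
  have "measure ?P {z\<in>space ?P. Si z \<le> t} \<le> measure \<mu> {..t}"
  proof (rule LIMSEQ_le_const[OF lim_right[OF rd]])
    show "\<exists>N. \<forall>j\<ge>N. measure ?P {z\<in>space ?P. Si z \<le> t} \<le> measure \<mu> {..t + 1 / real (Suc j)}"
    proof (intro exI allI impI)
      fix j :: nat
      have "measure ?P {z\<in>space ?P. Si z \<le> t} \<le> measure ?P {z\<in>space ?P. Si z < t + 1 / real (Suc j)}"
      proof (rule P.finite_measure_mono)
        have "0 < 1 / real (Suc j)" by simp
        moreover have "0 < d \<Longrightarrow> {z\<in>space ?P. Si z \<le> t} \<subseteq> {z\<in>space ?P. Si z < t + d}" for d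
          by auto
        ultimately show "{z\<in>space ?P. Si z \<le> t} \<subseteq> {z\<in>space ?P. Si z < t + 1 / real (Suc j)}"
          by blast
      qed auto
      also have "\<dots> \<le> measure \<Omega> {x\<in>space \<Omega>. Y x \<le> t + 1 / real (Suc j)}" by (rule step1)
      also have "\<dots> = measure \<mu> {..t + 1 / real (Suc j)}"
        unfolding Ylaw[symmetric] by (simp add: meas_distr_le)
      finally show "measure ?P {z\<in>space ?P. Si z \<le> t} \<le> measure \<mu> {..t + 1 / real (Suc j)}" .
    qed
  qed
  then show "measure (Slaw \<mu> n \<theta>) {..t} \<le> measure \<mu> {..t}"
    unfolding SlawSi by (simp add: meas_distr_le)
qed

lemma indep_vars_sets_cong:
  assumes "prob_space \<Omega>" "\<And>i. i \<in> I \<Longrightarrow> sets (M' i) = sets (N' i)"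
  shows "prob_space.indep_vars \<Omega> M' X I \<longleftrightarrow> prob_space.indep_vars \<Omega> N' X I"
proof -
  interpret prob_space \<Omega> by fact
  show ?thesis unfolding indep_vars_def2
    by (intro conj_cong indep_sets_cong ball_cong refl)
       (auto simp: assms(2) measurable_cong_sets[OF refl assms(2)])
qed

lemma distr_fst_borel:
  assumes \<mu>: "real_distribution \<mu>" and \<nu>: "real_distribution \<nu>"
  shows "distr (\<mu> \<Otimes>\<^sub>M \<nu>) borel fst = \<mu>"
proof (rule measure_eqI)
  interpret \<mu>: real_distribution \<mu> by fact
  interpret \<nu>: real_distribution \<nu> by fact
  show "sets (distr (\<mu> \<Otimes>\<^sub>M \<nu>) borel fst) = sets \<mu>" by simp
  fix A assume A: "A \<in> sets (distr (\<mu> \<Otimes>\<^sub>M \<nu>) borel fst)"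
  then have A': "A \<in> sets \<mu>" by simp
  have "emeasure (distr (\<mu> \<Otimes>\<^sub>M \<nu>) borel fst) A = emeasure (\<mu> \<Otimes>\<^sub>M \<nu>) (A \<times> space \<nu>)"
    using A by (subst emeasure_distr) (auto simp: space_pair_measure intro!: arg_cong2[where f=emeasure])
  also have "\<dots> = emeasure \<mu> A * emeasure \<nu> (space \<nu>)"
    using A' by (intro \<nu>.emeasure_pair_measure_Times) auto
  finally show "emeasure (distr (\<mu> \<Otimes>\<^sub>M \<nu>) borel fst) A = emeasure \<mu> A"
    using \<nu>.emeasure_space_1 by simp
qed

lemma distr_snd_borel:
  assumes \<mu>: "real_distribution \<mu>" and \<nu>: "real_distribution \<nu>"
  shows "distr (\<mu> \<Otimes>\<^sub>M \<nu>) borel snd = \<nu>"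
proof (rule measure_eqI)
  interpret \<mu>: real_distribution \<mu> by fact
  interpret \<nu>: real_distribution \<nu> by fact
  show "sets (distr (\<mu> \<Otimes>\<^sub>M \<nu>) borel snd) = sets \<nu>" by simp
  fix A assume A: "A \<in> sets (distr (\<mu> \<Otimes>\<^sub>M \<nu>) borel snd)"
  then have A': "A \<in> sets \<nu>" by simp
  have "emeasure (distr (\<mu> \<Otimes>\<^sub>M \<nu>) borel snd) A = emeasure (\<mu> \<Otimes>\<^sub>M \<nu>) (space \<mu> \<times> A)"
    using A by (subst emeasure_distr) (auto simp: space_pair_measure intro!: arg_cong2[where f=emeasure])
  also have "\<dots> = emeasure \<mu> (space \<mu>) * emeasure \<nu> A"
    using A' by (intro \<nu>.emeasure_pair_measure_Times) auto
  finally show "emeasure (distr (\<mu> \<Otimes>\<^sub>M \<nu>) borel snd) A = emeasure \<nu> A"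
    using \<mu>.emeasure_space_1 by simp
qed

definition Om :: "real measure \<Rightarrow> real measure \<Rightarrow> nat \<Rightarrow> (nat \<Rightarrow> real) measure" where
  "Om \<mu> \<nu> n = PiM {..<2*n} (\<lambda>j. if j < n then \<mu> else \<nu>)"

context
  fixes \<mu> \<nu> :: "real measure" and n :: nat
  assumes \<mu>: "real_distribution \<mu>" and \<nu>: "real_distribution \<nu>" and n0: "n \<noteq> 0"
begin

lemma Om_prob: "prob_space (Om \<mu> \<nu> n)"
  unfolding Om_def using \<mu> \<nu> by (intro prob_space_PiM) (auto simp: real_distribution_def)

interpretation O: prob_space "Om \<mu> \<nu> n" by (rule Om_prob)

lemma Om_space: "z \<in> space (Om \<mu> \<nu> n) \<Longrightarrow> z \<in> {..<2*n} \<rightarrow>\<^sub>E UNIV"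
  unfolding Om_def space_PiM using \<mu> \<nu> by (auto simp: real_distribution_def)

lemma Om_meas[measurable]: "j < 2*n \<Longrightarrow> (\<lambda>z. z j) \<in> borel_measurable (Om \<mu> \<nu> n)"
proof -
  assume j: "j < 2*n"
  have m: "(\<lambda>z. z j) \<in> measurable (Om \<mu> \<nu> n) (if j < n then \<mu> else \<nu>)"
    unfolding Om_def by (rule measurable_component_singleton) (use j in simp)
  have s: "sets (if j < n then \<mu> else \<nu>) = sets borel"
    using \<mu> \<nu> by (auto simp: real_distribution_def real_distribution_axioms_def)
  show ?thesis using m unfolding measurable_cong_sets[OF refl s] .
qed

lemma Om_coords: "O.indep_vars (\<lambda>_. borel) (\<lambda>j z. z j) {..<2*n}"
proof -
  have "O.indep_vars (\<lambda>j. if j < n then \<mu> else \<nu>) (\<lambda>j z. z j) {..<2*n}"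
    unfolding Om_def by (rule coords_indep) (use \<mu> \<nu> n0 in \<open>auto simp: real_distribution_def lessThan_empty_iff\<close>)
  then show ?thesis
    by (subst indep_vars_sets_cong[OF Om_prob]) (use \<mu> \<nu> in \<open>auto simp: real_distribution_def real_distribution_axioms_def\<close>)
qed

lemma Om_coord_law: "j < 2*n \<Longrightarrow> distr (Om \<mu> \<nu> n) borel (\<lambda>z. z j) = (if j < n then \<mu> else \<nu>)"
proof -
  assume j: "j < 2*n"
  have m: "(\<lambda>z. z j) \<in> measurable (Om \<mu> \<nu> n) (if j < n then \<mu> else \<nu>)"
    unfolding Om_def by (rule measurable_component_singleton) (use j in simp)
  have s: "sets (if j < n then \<mu> else \<nu>) = sets borel"
    using \<mu> \<nu> by (auto simp: real_distribution_def real_distribution_axioms_def)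
  have "distr (Om \<mu> \<nu> n) borel (\<lambda>z. z j) = distr (distr (Om \<mu> \<nu> n) (if j < n then \<mu> else \<nu>) (\<lambda>z. z j)) borel (\<lambda>x. x)"
    by (subst distr_distr[OF _ m]) (auto simp: comp_def measurable_ident_sets[OF s])
  also have "distr (Om \<mu> \<nu> n) (if j < n then \<mu> else \<nu>) (\<lambda>z. z j) = (if j < n then \<mu> else \<nu>)"
    unfolding Om_def by (rule distr_PiM_component) (use \<mu> \<nu> j in \<open>auto simp: real_distribution_def\<close>)
  also have "distr (if j < n then \<mu> else \<nu>) borel (\<lambda>x. x) = (if j < n then \<mu> else \<nu>)"
    by (rule distr_id2) (simp add: s)
  finally show ?thesis .
qed

lemma Om_pair_law:
  assumes i: "i < n"
  shows "distr (Om \<mu> \<nu> n) (borel \<Otimes>\<^sub>M borel) (\<lambda>z. (z i, z (n+i))) = \<mu> \<Otimes>\<^sub>M \<nu>"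
proof -
  have "O.indep_var (PiM {i} (\<lambda>_. borel)) (\<lambda>z. restrict (\<lambda>j. z j) {i})
                    (PiM {n+i} (\<lambda>_. borel)) (\<lambda>z. restrict (\<lambda>j. z j) {n+i})"
    by (rule O.indep_var_restrict[OF Om_coords]) (use i in auto)
  from O.indep_var_compose[OF this measurable_component_singleton measurable_component_singleton]
  have "O.indep_var borel (\<lambda>z. z i) borel (\<lambda>z. z (n+i))"
    by (simp add: comp_def)
  then have "distr (Om \<mu> \<nu> n) borel (\<lambda>z. z i) \<Otimes>\<^sub>M distr (Om \<mu> \<nu> n) borel (\<lambda>z. z (n+i))
        = distr (Om \<mu> \<nu> n) (borel \<Otimes>\<^sub>M borel) (\<lambda>z. (z i, z (n+i)))"
    using O.indep_var_distribution_eq by blast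
  then show ?thesis using Om_coord_law[of i] Om_coord_law[of "n+i"] i by simp
qed

lemma Om_block:
  assumes f[measurable]: "f \<in> borel_measurable (borel \<Otimes>\<^sub>M borel)"
  shows "O.indep_vars (\<lambda>_. borel) (\<lambda>i z. f (z i, z (n+i))) {..<n}"
proof -
  have "O.indep_vars (\<lambda>i. PiM {i, n+i} (\<lambda>_. borel)) (\<lambda>i z. restrict (\<lambda>j. z j) {i, n+i}) {..<n}"
    by (rule O.indep_vars_restrict[OF Om_coords]) (auto simp: disjoint_family_on_def)
  then have "O.indep_vars (\<lambda>_. borel) (\<lambda>i z. (\<lambda>w. f (w i, w (n+i))) (restrict (\<lambda>j. z j) {i, n+i})) {..<n}"
    by (rule O.indep_vars_compose2) measurable
  then show ?thesis by simp
qed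

lemma Om_block_law:
  assumes f[measurable]: "f \<in> borel_measurable (borel \<Otimes>\<^sub>M borel)" and i: "i < n"
  shows "distr (Om \<mu> \<nu> n) borel (\<lambda>z. f (z i, z (n+i))) = distr (\<mu> \<Otimes>\<^sub>M \<nu>) borel f"
proof -
  have [measurable]: "(\<lambda>z. z i) \<in> borel_measurable (Om \<mu> \<nu> n)" "(\<lambda>z. z (n+i)) \<in> borel_measurable (Om \<mu> \<nu> n)"
    using i by (auto intro!: Om_meas)
  have m: "(\<lambda>z. (z i, z (n+i))) \<in> measurable (Om \<mu> \<nu> n) (borel \<Otimes>\<^sub>M borel)"
    by measurable
  have "distr (Om \<mu> \<nu> n) borel (\<lambda>z. f (z i, z (n+i))) =
      distr (distr (Om \<mu> \<nu> n) (borel \<Otimes>\<^sub>M borel) (\<lambda>z. (z i, z (n+i)))) borel f"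
    by (subst distr_distr[OF f m]) (simp add: comp_def)
  also have "\<dots> = distr (\<mu> \<Otimes>\<^sub>M \<nu>) borel f" by (simp add: Om_pair_law[OF i])
  finally show ?thesis .
qed

lemma Om_Slaw:
  assumes f[measurable]: "f \<in> borel_measurable (borel \<Otimes>\<^sub>M borel)"
  shows "distr (Om \<mu> \<nu> n) borel (\<lambda>z. \<Sum>i<n. \<theta> i * f (z i, z (n+i))) = Slaw (distr (\<mu> \<Otimes>\<^sub>M \<nu>) borel f) n \<theta>"
  by (rule iid_law[OF Om_prob n0 Om_block[OF f]]) (auto simp: Om_block_law[OF f])

lemma Om_sums:
  "distr (Om \<mu> \<nu> n) (borel \<Otimes>\<^sub>M borel) (\<lambda>z. (\<Sum>i<n. \<theta> i * z i, \<Sum>i<n. \<theta> i * z (n+i)))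
     = Slaw \<mu> n \<theta> \<Otimes>\<^sub>M Slaw \<nu> n \<theta>"
proof -
  have "O.indep_var (PiM {..<n} (\<lambda>_. borel)) (\<lambda>z. restrict (\<lambda>j. z j) {..<n})
                    (PiM {n..<2*n} (\<lambda>_. borel)) (\<lambda>z. restrict (\<lambda>j. z j) {n..<2*n})"
    by (rule O.indep_var_restrict[OF Om_coords]) auto
  moreover have "(\<lambda>w. \<Sum>i<n. \<theta> i * w i) \<in> borel_measurable (PiM {..<n} (\<lambda>_. borel))"
    by measurable
  moreover have "(\<lambda>w. \<Sum>i<n. \<theta> i * w (n+i)) \<in> borel_measurable (PiM {n..<2*n} (\<lambda>_. borel))"
    by measurable
  ultimately have "O.indep_var borel ((\<lambda>w. \<Sum>i<n. \<theta> i * w i) \<circ> (\<lambda>z. restrict (\<lambda>j. z j) {..<n}))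
       borel ((\<lambda>w. \<Sum>i<n. \<theta> i * w (n+i)) \<circ> (\<lambda>z. restrict (\<lambda>j. z j) {n..<2*n}))"
    by (rule O.indep_var_compose)
  then have ind: "O.indep_var borel (\<lambda>z. \<Sum>i<n. \<theta> i * z i) borel (\<lambda>z. \<Sum>i<n. \<theta> i * z (n+i))"
    by (simp add: comp_def)
  have fst: "distr (Om \<mu> \<nu> n) borel (\<lambda>z. \<Sum>i<n. \<theta> i * z i) = Slaw \<mu> n \<theta>"
  proof -
    have "distr (\<mu> \<Otimes>\<^sub>M \<nu>) borel fst = \<mu>" by (rule distr_fst_borel[OF \<mu> \<nu>])
    then show ?thesis using Om_Slaw[of fst \<theta>] by simp
  qed
  have snd: "distr (Om \<mu> \<nu> n) borel (\<lambda>z. \<Sum>i<n. \<theta> i * z (n+i)) = Slaw \<nu> n \<theta>"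
  proof -
    have "distr (\<mu> \<Otimes>\<^sub>M \<nu>) borel snd = \<nu>" by (rule distr_snd_borel[OF \<mu> \<nu>])
    then show ?thesis using Om_Slaw[of snd \<theta>] by simp
  qed
  have "distr (Om \<mu> \<nu> n) borel (\<lambda>z. \<Sum>i<n. \<theta> i * z i) \<Otimes>\<^sub>M distr (Om \<mu> \<nu> n) borel (\<lambda>z. \<Sum>i<n. \<theta> i * z (n+i))
     = distr (Om \<mu> \<nu> n) (borel \<Otimes>\<^sub>M borel) (\<lambda>z. (\<Sum>i<n. \<theta> i * z i, \<Sum>i<n. \<theta> i * z (n+i)))"
    using ind O.indep_var_distribution_eq by blast
  then show ?thesis unfolding fst snd by (rule sym)
qed

end

lemma measure_Times_rd:
  assumes "real_distribution \<alpha>" "real_distribution \<beta>" "A \<in> sets borel" "B \<in> sets borel"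
  shows "measure (\<alpha> \<Otimes>\<^sub>M \<beta>) (A \<times> B) = measure \<alpha> A * measure \<beta> B"
proof -
  interpret a: real_distribution \<alpha> by fact
  interpret b: real_distribution \<beta> by fact
  have "emeasure (\<alpha> \<Otimes>\<^sub>M \<beta>) (A \<times> B) = emeasure \<alpha> A * emeasure \<beta> B"
    by (rule b.emeasure_pair_measure_Times) (use assms in simp_all)
  then show ?thesis by (simp add: measure_def enn2real_mult)
qed

lemma rd_pair: "real_distribution \<alpha> \<Longrightarrow> real_distribution \<beta> \<Longrightarrow> prob_space (\<alpha> \<Otimes>\<^sub>M \<beta>)"
  by (simp add: real_distribution_def prob_space_pair)

lemma rd_distr: "prob_space P \<Longrightarrow> f \<in> borel_measurable P \<Longrightarrow> real_distribution (distr P borel f)"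
  by (simp add: real_distribution_def real_distribution_axioms_def prob_space.prob_space_distr)

lemma Slaw_meas:
  assumes "real_distribution \<mu>"
  shows "(\<lambda>x. \<Sum>i<n. \<theta> i * x i) \<in> borel_measurable (PiM {..<n} (\<lambda>_. \<mu>))"
proof -
  have s: "sets (PiM {..<n} (\<lambda>_. \<mu>)) = sets (PiM {..<n} (\<lambda>_. borel))"
    using assms by (intro sets_PiM_cong) (auto simp: real_distribution_def real_distribution_axioms_def)
  have "(\<lambda>x. \<Sum>i<n. \<theta> i * x i) \<in> borel_measurable (PiM {..<n} (\<lambda>_. borel))" by measurable
  then show ?thesis unfolding measurable_cong_sets[OF s refl] .
qed

lemma rd_Slaw: "real_distribution \<mu> \<Longrightarrow> real_distribution (Slaw \<mu> n \<theta>)"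
  unfolding Slaw_def
  by (rule rd_distr[OF _ Slaw_meas]) (auto intro!: prob_space_PiM simp: real_distribution_def)

lemma sum_pair_le:
  assumes a: "real_distribution \<alpha>" and b: "real_distribution \<beta>"
    and m: "real_distribution \<mu>" and n: "real_distribution \<nu>"
    and am: "\<And>t. measure \<alpha> {..t} \<le> measure \<mu> {..t}" and bn: "\<And>t. measure \<beta> {..t} \<le> measure \<nu> {..t}"
  shows "measure (\<alpha> \<Otimes>\<^sub>M \<beta>) {p. fst p + snd p \<le> t} \<le> measure (\<mu> \<Otimes>\<^sub>M \<nu>) {p. fst p + snd p \<le> t}"
proof -
  interpret a: real_distribution \<alpha> by fact
  interpret b: real_distribution \<beta> by fact
  interpret m: real_distribution \<mu> by fact
  interpret n: real_distribution \<nu> by fact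
  let ?D = "{p::real\<times>real. fst p + snd p \<le> t}"
  have "{p \<in> space (borel \<Otimes>\<^sub>M borel). fst p + snd p \<le> t} \<in> sets (borel \<Otimes>\<^sub>M borel)" by measurable
  then have Dsets: "?D \<in> sets (borel \<Otimes>\<^sub>M borel)" by (simp add: space_pair_measure)
  have DS: "?D \<in> sets (X \<Otimes>\<^sub>M Y)" if "sets X = sets borel" "sets Y = sets borel" for X Y :: "real measure"
    using Dsets by (simp add: sets_pair_measure_cong[OF that])
  have pre1: "Pair x -` ?D = {..t - x}" for x by auto
  have pre2: "(\<lambda>x. (x, y)) -` ?D = {..t - y}" for y by auto
  have pre3: "{y. x + y \<le> t} = {..t - x}" for x by auto
  have pre4: "{x. x + y \<le> t} = {..t - y}" for y by auto
  have eleq: "emeasure X {..s} \<le> emeasure Y {..s}"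
    if "real_distribution X" "real_distribution Y" "measure X {..s} \<le> measure Y {..s}" for X Y s
  proof -
    interpret X: real_distribution X by fact
    interpret Y: real_distribution Y by fact
    show ?thesis using that(3) by (simp add: X.emeasure_eq_measure Y.emeasure_eq_measure)
  qed
  interpret ab: pair_sigma_finite \<alpha> \<beta> by unfold_locales
  interpret an: pair_sigma_finite \<alpha> \<nu> by unfold_locales
  interpret mn: pair_sigma_finite \<mu> \<nu> by unfold_locales
  have "emeasure (\<alpha> \<Otimes>\<^sub>M \<beta>) ?D = (\<integral>\<^sup>+x. emeasure \<beta> {..t - x} \<partial>\<alpha>)"
    by (subst b.emeasure_pair_measure_alt[OF DS]) (simp_all add: pre1 pre3)
  also have "\<dots> \<le> (\<integral>\<^sup>+x. emeasure \<nu> {..t - x} \<partial>\<alpha>)"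
    by (intro nn_integral_mono eleq b n bn)
  also have "\<dots> = emeasure (\<alpha> \<Otimes>\<^sub>M \<nu>) ?D"
    by (subst n.emeasure_pair_measure_alt[OF DS]) (simp_all add: pre1 pre3)
  also have "\<dots> = (\<integral>\<^sup>+y. emeasure \<alpha> {..t - y} \<partial>\<nu>)"
    by (subst an.emeasure_pair_measure_alt2[OF DS]) (simp_all add: pre2 pre4)
  also have "\<dots> \<le> (\<integral>\<^sup>+y. emeasure \<mu> {..t - y} \<partial>\<nu>)"
    by (intro nn_integral_mono eleq a m am)
  also have "\<dots> = emeasure (\<mu> \<Otimes>\<^sub>M \<nu>) ?D"
    by (subst mn.emeasure_pair_measure_alt2[OF DS]) (simp_all add: pre2 pre4)
  finally have le: "emeasure (\<alpha> \<Otimes>\<^sub>M \<beta>) ?D \<le> emeasure (\<mu> \<Otimes>\<^sub>M \<nu>) ?D" .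
  interpret P1: prob_space "\<alpha> \<Otimes>\<^sub>M \<beta>" by (rule rd_pair[OF a b])
  interpret P2: prob_space "\<mu> \<Otimes>\<^sub>M \<nu>" by (rule rd_pair[OF m n])
  show ?thesis using le
    by (simp add: P1.emeasure_eq_measure P2.emeasure_eq_measure)
qed

lemma measure_distr_comp:
  assumes h: "h \<in> measurable P N" and f: "f \<in> borel_measurable N"
  shows "measure (distr P borel (\<lambda>x. f (h x))) {..t} = measure (distr P N h) {y\<in>space N. f y \<le> (t::real)}"
proof -
  have fh: "(\<lambda>x. f (h x)) \<in> borel_measurable P" using measurable_compose[OF h f] .
  have S: "{y\<in>space N. f y \<le> t} \<in> sets N" using f by measurable
  have "measure (distr P N h) {y\<in>space N. f y \<le> t} = measure P (h -` {y\<in>space N. f y \<le> t} \<inter> space P)"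
    by (rule measure_distr[OF h S])
  also have "h -` {y\<in>space N. f y \<le> t} \<inter> space P = {x\<in>space P. f (h x) \<le> t}"
    using measurable_space[OF h] by auto
  finally show ?thesis by (simp add: meas_distr_le[OF fh])
qed

lemma pair_law:
  assumes "prob_space M" "prob_space.indep_var M borel X borel Y"
  shows "distr M (borel \<Otimes>\<^sub>M borel) (\<lambda>\<omega>. (X \<omega>, Y \<omega>)) = distr M borel X \<Otimes>\<^sub>M distr M borel Y"
proof -
  have "distr M borel X \<Otimes>\<^sub>M distr M borel Y = distr M (borel \<Otimes>\<^sub>M borel) (\<lambda>\<omega>. (X \<omega>, Y \<omega>))"
    using prob_space.indep_var_distribution_eq[OF assms(1)] assms(2) by blast
  then show ?thesis by (rule sym)
qed

lemma rv_law:
  assumes M: "prob_space M" and X[measurable]: "X \<in> borel_measurable M" and Y[measurable]: "Y \<in> borel_measurable M"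
    and ind: "prob_space.indep_var M borel X borel Y"
    and f[measurable]: "f \<in> borel_measurable (borel \<Otimes>\<^sub>M borel)"
  shows "distr M borel (\<lambda>\<omega>. f (X \<omega>, Y \<omega>)) = distr (distr M borel X \<Otimes>\<^sub>M distr M borel Y) borel f"
proof -
  have m: "(\<lambda>\<omega>. (X \<omega>, Y \<omega>)) \<in> measurable M (borel \<Otimes>\<^sub>M borel)" by measurable
  show ?thesis
    unfolding pair_law[OF M ind, symmetric]
    by (subst distr_distr[OF f m]) (simp add: comp_def)
qed

lemma fmeas_pair:
  assumes "real_distribution \<mu>" "real_distribution \<nu>" "f \<in> borel_measurable (borel \<Otimes>\<^sub>M borel)"
  shows "f \<in> borel_measurable (\<mu> \<Otimes>\<^sub>M \<nu>)"
proof -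
  have s: "sets (\<mu> \<Otimes>\<^sub>M \<nu>) = sets (borel \<Otimes>\<^sub>M borel)"
    using assms by (intro sets_pair_measure_cong) (auto simp: real_distribution_def real_distribution_axioms_def)
  show ?thesis using assms(3) unfolding measurable_cong_sets[OF s refl] .
qed

lemma sp: "real_distribution \<mu> \<Longrightarrow> space \<mu> = UNIV"
  by (simp add: real_distribution.space_eq_univ)

lemma part_d:
  assumes Dm: "D_minus \<mu>" and Dn: "D_minus \<nu>"
  shows "D_minus (distr (\<mu> \<Otimes>\<^sub>M \<nu>) borel (\<lambda>p. fst p + snd p))"
proof -
  have \<mu>: "real_distribution \<mu>" and \<nu>: "real_distribution \<nu>" using Dm Dn by (auto simp: D_minus_def)
  have f[measurable]: "(\<lambda>p::real\<times>real. fst p + snd p) \<in> borel_measurable (borel \<Otimes>\<^sub>M borel)" by measurable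
  show ?thesis
    unfolding D_minus_Slaw
  proof (intro conjI allI impI)
    show "real_distribution (distr (\<mu> \<Otimes>\<^sub>M \<nu>) borel (\<lambda>p. fst p + snd p))"
      by (rule rd_distr[OF rd_pair[OF \<mu> \<nu>] fmeas_pair[OF \<mu> \<nu> f]])
    fix n \<theta> t assume a: "(\<forall>i<n. 0 \<le> (\<theta>::nat\<Rightarrow>real) i) \<and> (\<Sum>i<n. \<theta> i) = 1"
    have n0: "n \<noteq> 0" using a sum1_nonempty by blast
    let ?O = "Om \<mu> \<nu> n"
    let ?h = "\<lambda>z. (\<Sum>i<n. \<theta> i * z i, \<Sum>i<n. \<theta> i * z (n+i))"
    have [measurable]: "(\<lambda>z. z j) \<in> borel_measurable ?O" if "j < 2*n" for j
      using Om_meas[OF \<mu> \<nu> n0 that] .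
    have hm: "?h \<in> measurable ?O (borel \<Otimes>\<^sub>M borel)" by measurable
    have "Slaw (distr (\<mu> \<Otimes>\<^sub>M \<nu>) borel (\<lambda>p. fst p + snd p)) n \<theta> =
          distr ?O borel (\<lambda>z. \<Sum>i<n. \<theta> i * (fst (z i, z (n+i)) + snd (z i, z (n+i))))"
      by (rule Om_Slaw[OF \<mu> \<nu> n0 f, symmetric])
    also have "\<dots> = distr ?O borel (\<lambda>z. (\<lambda>p. fst p + snd p) (?h z))"
      by (simp add: distrib_left sum.distrib)
    finally have "measure (Slaw (distr (\<mu> \<Otimes>\<^sub>M \<nu>) borel (\<lambda>p. fst p + snd p)) n \<theta>) {..t}
        = measure (distr ?O (borel \<Otimes>\<^sub>M borel) ?h) {y\<in>space (borel \<Otimes>\<^sub>M borel). fst y + snd y \<le> t}"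
      using measure_distr_comp[OF hm f] by simp
    also have "\<dots> = measure (Slaw \<mu> n \<theta> \<Otimes>\<^sub>M Slaw \<nu> n \<theta>) {p. fst p + snd p \<le> t}"
      by (simp add: Om_sums[OF \<mu> \<nu> n0] space_pair_measure)
    also have "\<dots> \<le> measure (\<mu> \<Otimes>\<^sub>M \<nu>) {p. fst p + snd p \<le> t}"
      by (rule sum_pair_le[OF rd_Slaw[OF \<mu>] rd_Slaw[OF \<nu>] \<mu> \<nu>]) (use Dm Dn a in \<open>auto simp: D_minus_Slaw\<close>)
    also have "\<dots> = measure (distr (\<mu> \<Otimes>\<^sub>M \<nu>) borel (\<lambda>p. fst p + snd p)) {..t}"
      by (subst measure_distr[OF fmeas_pair[OF \<mu> \<nu> f]])
         (auto simp: space_pair_measure vimage_def sp[OF \<mu>] sp[OF \<nu>] intro!: arg_cong[where f="measure _"])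
    finally show "measure (Slaw (distr (\<mu> \<Otimes>\<^sub>M \<nu>) borel (\<lambda>p. fst p + snd p)) n \<theta>) {..t}
        \<le> measure (distr (\<mu> \<Otimes>\<^sub>M \<nu>) borel (\<lambda>p. fst p + snd p)) {..t}" .
  qed
qed

lemma part_e:
  assumes Dm: "D_minus \<mu>" and Dn: "D_minus \<nu>"
  shows "D_minus (distr (\<mu> \<Otimes>\<^sub>M \<nu>) borel (\<lambda>p. max (fst p) (snd p)))"
proof -
  have \<mu>: "real_distribution \<mu>" and \<nu>: "real_distribution \<nu>" using Dm Dn by (auto simp: D_minus_def)
  have f[measurable]: "(\<lambda>p::real\<times>real. max (fst p) (snd p)) \<in> borel_measurable (borel \<Otimes>\<^sub>M borel)" by measurable
  show ?thesis
    unfolding D_minus_Slaw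
  proof (intro conjI allI impI)
    show "real_distribution (distr (\<mu> \<Otimes>\<^sub>M \<nu>) borel (\<lambda>p. max (fst p) (snd p)))"
      by (rule rd_distr[OF rd_pair[OF \<mu> \<nu>] fmeas_pair[OF \<mu> \<nu> f]])
    fix n \<theta> t assume a: "(\<forall>i<n. 0 \<le> (\<theta>::nat\<Rightarrow>real) i) \<and> (\<Sum>i<n. \<theta> i) = 1"
    have n0: "n \<noteq> 0" using a sum1_nonempty by blast
    let ?O = "Om \<mu> \<nu> n"
    interpret O: prob_space ?O by (rule Om_prob[OF \<mu> \<nu> n0])
    let ?h = "\<lambda>z. (\<Sum>i<n. \<theta> i * z i, \<Sum>i<n. \<theta> i * z (n+i))"
    let ?g = "\<lambda>z. \<Sum>i<n. \<theta> i * max (z i) (z (n+i))"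
    have [measurable]: "(\<lambda>z. z j) \<in> borel_measurable ?O" if "j < 2*n" for j
      using Om_meas[OF \<mu> \<nu> n0 that] .
    have hm: "?h \<in> measurable ?O (borel \<Otimes>\<^sub>M borel)" by measurable
    have gm: "?g \<in> borel_measurable ?O" by measurable
    have "Slaw (distr (\<mu> \<Otimes>\<^sub>M \<nu>) borel (\<lambda>p. max (fst p) (snd p))) n \<theta> = distr ?O borel ?g"
      using Om_Slaw[OF \<mu> \<nu> n0 f, of \<theta>] by simp
    then have "measure (Slaw (distr (\<mu> \<Otimes>\<^sub>M \<nu>) borel (\<lambda>p. max (fst p) (snd p))) n \<theta>) {..t}
        = measure ?O {z\<in>space ?O. ?g z \<le> t}"
      by (simp add: meas_distr_le[OF gm])
    also have "\<dots> \<le> measure ?O (?h -` ({..t} \<times> {..t}) \<inter> space ?O)"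
    proof (rule O.finite_measure_mono)
      show "{z\<in>space ?O. ?g z \<le> t} \<subseteq> ?h -` ({..t} \<times> {..t}) \<inter> space ?O"
      proof -
        have "?h z \<in> {..t} \<times> {..t}" if "?g z \<le> t" for z
        proof -
          have "(\<Sum>i<n. \<theta> i * z i) \<le> ?g z" "(\<Sum>i<n. \<theta> i * z (n+i)) \<le> ?g z"
            using a by (auto intro!: sum_mono mult_left_mono)
          then show ?thesis using that by auto
        qed
        then show ?thesis by blast
      qed
      show "?h -` ({..t} \<times> {..t}) \<inter> space ?O \<in> sets ?O"
        by (rule measurable_sets[OF hm]) simp
    qed
    also have "\<dots> = measure (distr ?O (borel \<Otimes>\<^sub>M borel) ?h) ({..t} \<times> {..t})"
      by (rule measure_distr[symmetric, OF hm]) simp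
    also have "\<dots> = measure (Slaw \<mu> n \<theta>) {..t} * measure (Slaw \<nu> n \<theta>) {..t}"
      by (simp add: Om_sums[OF \<mu> \<nu> n0] measure_Times_rd[OF rd_Slaw[OF \<mu>] rd_Slaw[OF \<nu>]])
    also have "\<dots> \<le> measure \<mu> {..t} * measure \<nu> {..t}"
      by (rule mult_mono) (use Dm Dn a in \<open>auto simp: D_minus_Slaw\<close>)
    also have "\<dots> = measure (\<mu> \<Otimes>\<^sub>M \<nu>) ({..t} \<times> {..t})"
      by (simp add: measure_Times_rd[OF \<mu> \<nu>])
    also have "\<dots> = measure (distr (\<mu> \<Otimes>\<^sub>M \<nu>) borel (\<lambda>p. max (fst p) (snd p))) {..t}"
      by (subst measure_distr[OF fmeas_pair[OF \<mu> \<nu> f]])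
         (auto simp: space_pair_measure vimage_def sp[OF \<mu>] sp[OF \<nu>] intro!: arg_cong[where f="measure _"])
    finally show "measure (Slaw (distr (\<mu> \<Otimes>\<^sub>M \<nu>) borel (\<lambda>p. max (fst p) (snd p))) n \<theta>) {..t}
        \<le> measure (distr (\<mu> \<Otimes>\<^sub>M \<nu>) borel (\<lambda>p. max (fst p) (snd p))) {..t}" .
  qed
qed

lemma part_d_rv:
  assumes M: "prob_space M" and X: "X \<in> borel_measurable M" and Y: "Y \<in> borel_measurable M"
    and DX: "D_minus_rv M X" and DY: "D_minus_rv M Y" and ind: "prob_space.indep_var M borel X borel Y"
  shows "D_minus_rv M (\<lambda>\<omega>. X \<omega> + Y \<omega>)"
proof -
  have f: "(\<lambda>p::real\<times>real. fst p + snd p) \<in> borel_measurable (borel \<Otimes>\<^sub>M borel)" by measurable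
  show ?thesis
    using rv_law[OF M X Y ind f] part_d[of "distr M borel X" "distr M borel Y"] DX DY
    by (simp add: D_minus_rv_def)
qed

lemma part_e_rv:
  assumes M: "prob_space M" and X: "X \<in> borel_measurable M" and Y: "Y \<in> borel_measurable M"
    and DX: "D_minus_rv M X" and DY: "D_minus_rv M Y" and ind: "prob_space.indep_var M borel X borel Y"
  shows "D_minus_rv M (\<lambda>\<omega>. max (X \<omega>) (Y \<omega>))"
proof -
  have f: "(\<lambda>p::real\<times>real. max (fst p) (snd p)) \<in> borel_measurable (borel \<Otimes>\<^sub>M borel)" by measurable
  show ?thesis
    using rv_law[OF M X Y ind f] part_e[of "distr M borel X" "distr M borel Y"] DX DY
    by (simp add: D_minus_rv_def)
qed

lemma layer:
  assumes a: "real_distribution \<alpha>"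
  shows "(\<integral>\<^sup>+x. ennreal (max 0 (x - m)) \<partial>\<alpha>) = (\<integral>\<^sup>+s. indicator {m..} s * emeasure \<alpha> {s<..} \<partial>lborel)"
proof -
  interpret a: real_distribution \<alpha> by fact
  interpret pair_sigma_finite lborel \<alpha> by unfold_locales
  have eq1: "ennreal (max 0 (x - m)) = (\<integral>\<^sup>+s. indicator {m..<x} s \<partial>lborel)" for x
  proof (cases "m \<le> x")
    case True then show ?thesis by simp
  next
    case False then show ?thesis by simp
  qed
  have ind: "(\<lambda>(s::real, y::real). indicator {m..<y} s :: ennreal) = (\<lambda>p. if m \<le> fst p \<and> fst p < snd p then 1 else 0)"
    by (auto simp: fun_eq_iff indicator_def)
  have sb: "sets (lborel \<Otimes>\<^sub>M \<alpha>) = sets (borel \<Otimes>\<^sub>M borel)"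
    by (intro sets_pair_measure_cong) auto
  have "(\<lambda>p::real\<times>real. if m \<le> fst p \<and> fst p < snd p then 1 else 0 :: ennreal) \<in> borel_measurable (borel \<Otimes>\<^sub>M borel)"
    by measurable
  then have meas: "(\<lambda>(s::real, y::real). indicator {m..<y} s :: ennreal) \<in> borel_measurable (lborel \<Otimes>\<^sub>M \<alpha>)"
    unfolding ind measurable_cong_sets[OF sb refl] .
  have eq2: "(\<integral>\<^sup>+y. indicator {m..<y} s \<partial>\<alpha>) = indicator {m..} s * emeasure \<alpha> {s<..}" for s
  proof -
    have "(\<integral>\<^sup>+y. indicator {m..<y} s \<partial>\<alpha>) = (\<integral>\<^sup>+y. indicator {m..} s * indicator {s<..} y \<partial>\<alpha>)"
      by (intro nn_integral_cong) (auto simp: indicator_def)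
    also have "\<dots> = indicator {m..} s * emeasure \<alpha> {s<..}"
      by (rule nn_integral_cmult_indicator) simp
    finally show ?thesis .
  qed
  have "(\<integral>\<^sup>+x. ennreal (max 0 (x - m)) \<partial>\<alpha>) = (\<integral>\<^sup>+y. (\<integral>\<^sup>+s. indicator {m..<y} s \<partial>lborel) \<partial>\<alpha>)"
    by (intro nn_integral_cong eq1)
  also have "\<dots> = (\<integral>\<^sup>+s. (\<integral>\<^sup>+y. indicator {m..<y} s \<partial>\<alpha>) \<partial>lborel)"
    by (rule Fubini'[OF meas])
  also have "\<dots> = (\<integral>\<^sup>+s. indicator {m..} s * emeasure \<alpha> {s<..} \<partial>lborel)"
    by (intro nn_integral_cong eq2)
  finally show ?thesis .
qed

lemma st_posint:
  assumes a: "real_distribution \<alpha>" and b: "real_distribution \<beta>"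
    and le: "\<And>t. measure \<beta> {..t} \<le> measure \<alpha> {..t}"
  shows "(\<integral>\<^sup>+x. ennreal (max 0 (x - m)) \<partial>\<alpha>) \<le> (\<integral>\<^sup>+x. ennreal (max 0 (x - m)) \<partial>\<beta>)"
proof -
  interpret a: real_distribution \<alpha> by fact
  interpret b: real_distribution \<beta> by fact
  have "emeasure \<alpha> {s<..} \<le> emeasure \<beta> {s<..}" for s
  proof -
    have c: "{s<..} = UNIV - {..s}" by auto
    have "measure \<alpha> {s<..} \<le> measure \<beta> {s<..}"
      unfolding c using a.prob_compl[of "{..s}"] b.prob_compl[of "{..s}"] le[of s] by simp
    then show ?thesis by (simp add: a.emeasure_eq_measure b.emeasure_eq_measure)
  qed
  then show ?thesis unfolding layer[OF a] layer[OF b]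
    by (intro nn_integral_mono mult_left_mono) auto
qed

lemma part_b_dist:
  assumes D: "D_minus \<mu>" and int: "integrable \<mu> (\<lambda>x. x)"
  shows "AE x in \<mu>. x = (\<integral>x. x \<partial>\<mu>)"
proof -
  have rd: "real_distribution \<mu>" using D by (simp add: D_minus_def)
  interpret a: real_distribution \<mu> by fact
  define m where "m = (\<integral>x. x \<partial>\<mu>)"
  have pu: "measure \<mu> UNIV = 1" using a.prob_space by simp
  let ?P = "PiM {..<2::nat} (\<lambda>_. \<mu>)"
  interpret P: prob_space ?P by (intro prob_space_PiM) (simp add: a.prob_space_axioms)
  define \<theta> :: "nat \<Rightarrow> real" where "\<theta> = (\<lambda>_. 1/2)"
  define S where "S z = (\<Sum>i<2. \<theta> i * z i)" for z :: "nat \<Rightarrow> real"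
  have S_eq: "S z = (z 0 + z 1) / 2" for z
    by (simp add: S_def \<theta>_def numeral_2_eq_2 lessThan_Suc)
  have comp: "distr ?P \<mu> (\<lambda>z. z i) = \<mu>" if "i < 2" for i
    by (rule distr_PiM_component) (use that in \<open>auto simp: a.prob_space_axioms\<close>)
  have cm: "(\<lambda>z. z i) \<in> measurable ?P \<mu>" if "i < 2" for i
    by (rule measurable_component_singleton) (use that in simp)
  have cmb[measurable]: "(\<lambda>z. z i) \<in> borel_measurable ?P" if "i < 2" for i
    using cm[OF that] by (simp add: measurable_cong_sets[OF refl a.events_eq_borel])
  have int_c: "integrable ?P (\<lambda>z. g (z i)) \<longleftrightarrow> integrable \<mu> g" if "i < 2" "g \<in> borel_measurable borel" for i and g :: "real \<Rightarrow> real"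
  proof -
    have g': "g \<in> borel_measurable \<mu>" using that(2) by (simp add: measurable_cong_sets[OF a.events_eq_borel refl])
    show ?thesis using integrable_distr_eq[OF cm[OF that(1)] g'] comp[OF that(1)] by simp
  qed
  have integral_c: "(\<integral>z. g (z i) \<partial>?P) = (\<integral>x. g x \<partial>\<mu>)" if "i < 2" "g \<in> borel_measurable borel" for i and g :: "real \<Rightarrow> real"
  proof -
    have g': "g \<in> borel_measurable \<mu>" using that(2) by (simp add: measurable_cong_sets[OF a.events_eq_borel refl])
    show ?thesis using integral_distr[OF cm[OF that(1)] g'] comp[OF that(1)] by simp
  qed
  have i0: "integrable ?P (\<lambda>z. z 0)" by (rule int_c[of 0 "\<lambda>x. x", THEN iffD2]) (auto simp: int)
  have i1: "integrable ?P (\<lambda>z. z 1)" by (rule int_c[of 1 "\<lambda>x. x", THEN iffD2]) (auto simp: int)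
  have intabs: "integrable \<mu> (\<lambda>x. \<bar>x - m\<bar>)" using int by auto
  have ia0: "integrable ?P (\<lambda>z. \<bar>z 0 - m\<bar>)" by (rule int_c[of 0 "\<lambda>x. \<bar>x - m\<bar>", THEN iffD2]) (auto simp: intabs)
  have ia1: "integrable ?P (\<lambda>z. \<bar>z 1 - m\<bar>)" by (rule int_c[of 1 "\<lambda>x. \<bar>x - m\<bar>", THEN iffD2]) (auto simp: intabs)
  have I0: "(\<integral>z. \<bar>z 0 - m\<bar> \<partial>?P) = (\<integral>x. \<bar>x - m\<bar> \<partial>\<mu>)" by (rule integral_c[of 0 "\<lambda>x. \<bar>x - m\<bar>"]) auto
  have I1: "(\<integral>z. \<bar>z 1 - m\<bar> \<partial>?P) = (\<integral>x. \<bar>x - m\<bar> \<partial>\<mu>)" by (rule integral_c[of 1 "\<lambda>x. \<bar>x - m\<bar>"]) auto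
  have J0: "(\<integral>z. z 0 \<partial>?P) = m" unfolding m_def by (rule integral_c[of 0 "\<lambda>x. x"]) auto
  have J1: "(\<integral>z. z 1 \<partial>?P) = m" unfolding m_def by (rule integral_c[of 1 "\<lambda>x. x"]) auto
  have Sm[measurable]: "S \<in> borel_measurable ?P" unfolding S_eq by measurable
  have st: "measure (distr ?P borel S) {..t} \<le> measure \<mu> {..t}" for t
  proof -
    have "measure (Slaw \<mu> 2 \<theta>) {..t} \<le> measure \<mu> {..t}"
      using D unfolding D_minus_Slaw by (auto simp: \<theta>_def)
    then show ?thesis by (simp add: Slaw_def S_def[abs_def])
  qed
  have rdS: "real_distribution (distr ?P borel S)"
    by (simp add: real_distribution_def real_distribution_axioms_def P.prob_space_distr)
  have "(\<integral>\<^sup>+x. ennreal (max 0 (x - m)) \<partial>\<mu>) \<le> (\<integral>\<^sup>+x. ennreal (max 0 (x - m)) \<partial>distr ?P borel S)"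
    by (rule st_posint[OF rd rdS st])
  also have "\<dots> = (\<integral>\<^sup>+z. ennreal (max 0 (S z - m)) \<partial>?P)"
    by (rule nn_integral_distr) simp_all
  finally have nnle: "(\<integral>\<^sup>+x. ennreal (max 0 (x - m)) \<partial>\<mu>) \<le> (\<integral>\<^sup>+z. ennreal (max 0 (S z - m)) \<partial>?P)" .
  have iS: "integrable ?P (\<lambda>z. S z - m)" unfolding S_eq using i0 i1 by auto
  have imx1: "integrable \<mu> (\<lambda>x. max 0 (x - m))" using int by auto
  have imx2: "integrable ?P (\<lambda>z. max 0 (S z - m))" using iS by auto
  have rle: "(\<integral>x. max 0 (x - m) \<partial>\<mu>) \<le> (\<integral>z. max 0 (S z - m) \<partial>?P)"
  proof -
    have q1: "(\<integral>\<^sup>+x. ennreal (max 0 (x - m)) \<partial>\<mu>) = ennreal (\<integral>x. max 0 (x - m) \<partial>\<mu>)"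
      by (rule nn_integral_eq_integral[OF imx1]) simp
    have q2: "(\<integral>\<^sup>+z. ennreal (max 0 (S z - m)) \<partial>?P) = ennreal (\<integral>z. max 0 (S z - m) \<partial>?P)"
      by (rule nn_integral_eq_integral[OF imx2]) simp
    have "0 \<le> (\<integral>z. max 0 (S z - m) \<partial>?P)" by (rule Bochner_Integration.integral_nonneg) simp
    then show ?thesis using nnle unfolding q1 q2 by (simp add: ennreal_le_iff)
  qed
  have e1: "(\<integral>x. max 0 (x - m) \<partial>\<mu>) = (\<integral>x. \<bar>x - m\<bar> \<partial>\<mu>) / 2"
  proof -
    have "(\<integral>x. max 0 (x - m) \<partial>\<mu>) = (\<integral>x. (\<bar>x - m\<bar> + (x - m)) / 2 \<partial>\<mu>)"
      by (intro Bochner_Integration.integral_cong) (auto simp: max_def abs_if)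
    also have "\<dots> = ((\<integral>x. \<bar>x - m\<bar> \<partial>\<mu>) + ((\<integral>x. x \<partial>\<mu>) - m)) / 2"
      using int intabs by (simp add: pu)
    finally show ?thesis by (simp add: m_def)
  qed
  have e2: "(\<integral>z. max 0 (S z - m) \<partial>?P) = (\<integral>z. \<bar>S z - m\<bar> \<partial>?P) / 2"
  proof -
    have iaS: "integrable ?P (\<lambda>z. \<bar>S z - m\<bar>)" using iS by auto
    have "(\<integral>z. max 0 (S z - m) \<partial>?P) = (\<integral>z. (\<bar>S z - m\<bar> + (S z - m)) / 2 \<partial>?P)"
      by (intro Bochner_Integration.integral_cong) (auto simp: max_def abs_if)
    also have "\<dots> = ((\<integral>z. \<bar>S z - m\<bar> \<partial>?P) + (\<integral>z. S z - m \<partial>?P)) / 2"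
      using iaS iS by simp
    also have "(\<integral>z. S z - m \<partial>?P) = 0"
      unfolding S_eq using i0 i1 J0 J1 by (simp add: P.prob_space)
    finally show ?thesis by simp
  qed
  define g where "g z = \<bar>z 0 - m\<bar> + \<bar>z 1 - m\<bar> - \<bar>(z 0 - m) + (z 1 - m)\<bar>" for z :: "nat \<Rightarrow> real"
  have gS: "g z = \<bar>z 0 - m\<bar> + \<bar>z 1 - m\<bar> - 2 * \<bar>S z - m\<bar>" for z
    unfolding g_def S_eq by (simp add: abs_if field_simps)
  have ig: "integrable ?P g" unfolding gS using ia0 ia1 iS by auto
  have gnn: "0 \<le> g z" for z unfolding g_def by (simp add: abs_triangle_ineq)
  have "(\<integral>z. g z \<partial>?P) = 2 * (\<integral>x. \<bar>x - m\<bar> \<partial>\<mu>) - 2 * (\<integral>z. \<bar>S z - m\<bar> \<partial>?P)"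
    unfolding gS using ia0 ia1 iS I0 I1 by simp
  also have "\<dots> \<le> 0" using rle e1 e2 by simp
  finally have "(\<integral>z. g z \<partial>?P) = 0" using integral_nonneg_AE[of "g" ?P] gnn by (simp add: order_antisym)
  then have AEg: "AE z in ?P. g z = 0"
    using integral_nonneg_eq_0_iff_AE[OF ig] gnn by simp
  define A where "A i = (if i = 0 then {m<..} else {..<m::real})" for i :: nat
  have gpos: "0 < g z" if "z \<in> Pi\<^sub>E {..<2} A" for z
  proof -
    have "z 0 \<in> A 0" "z 1 \<in> A 1" using PiE_mem[OF that] by auto
    then have "z 0 > m" "z 1 < m" by (auto simp: A_def)
    then show ?thesis unfolding g_def by (simp add: abs_if)
  qed
  interpret PS: product_sigma_finite "\<lambda>_::nat. \<mu>"
    by (simp add: product_sigma_finite_def a.sigma_finite_measure_axioms)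
  have "emeasure ?P (Pi\<^sub>E {..<2} A) = (\<Prod>i<2. emeasure \<mu> (A i))"
    by (rule PS.emeasure_PiM) (auto simp: A_def)
  also have "\<dots> = emeasure \<mu> {m<..} * emeasure \<mu> {..<m}"
    by (simp add: numeral_2_eq_2 lessThan_Suc A_def mult.commute)
  finally have prodeq: "emeasure ?P (Pi\<^sub>E {..<2} A) = emeasure \<mu> {m<..} * emeasure \<mu> {..<m}" .
  have "emeasure ?P (Pi\<^sub>E {..<2} A) = 0"
  proof -
    from AEg obtain N where N: "{z \<in> space ?P. \<not> g z = 0} \<subseteq> N" "N \<in> sets ?P" "emeasure ?P N = 0"
      by (auto elim!: AE_E)
    have sub: "Pi\<^sub>E {..<2} A \<subseteq> N"
    proof
      fix z assume z: "z \<in> Pi\<^sub>E {..<2} A"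
      have "z \<in> space ?P" using z by (auto simp: space_PiM PiE_iff)
      then show "z \<in> N" using N(1) gpos[OF z] by auto
    qed
    have "Pi\<^sub>E {..<2} A \<in> sets ?P" by (rule sets_PiM_I_finite) (auto simp: A_def)
    then show ?thesis using emeasure_mono[OF sub N(2)] N(3) by simp
  qed
  then have "emeasure \<mu> {m<..} = 0 \<or> emeasure \<mu> {..<m} = 0" using prodeq by simp
  then show ?thesis
  proof
    assume z: "emeasure \<mu> {m<..} = 0"
    have AEle: "AE x in \<mu>. 0 \<le> m - x"
      by (rule AE_I[of _ _ "{m<..}"]) (use z in auto)
    have "(\<integral>x. m - x \<partial>\<mu>) = 0" using int by (simp add: pu m_def)
    then have "AE x in \<mu>. m - x = 0" using integral_nonneg_eq_0_iff_AE[OF _ AEle] int by simp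
    then show ?thesis by (auto simp: m_def[symmetric])
  next
    assume z: "emeasure \<mu> {..<m} = 0"
    have AEle: "AE x in \<mu>. 0 \<le> x - m"
      by (rule AE_I[of _ _ "{..<m}"]) (use z in auto)
    have "(\<integral>x. x - m \<partial>\<mu>) = 0" using int by (simp add: pu m_def)
    then have "AE x in \<mu>. x - m = 0" using integral_nonneg_eq_0_iff_AE[OF _ AEle] int by simp
    then show ?thesis by (auto simp: m_def[symmetric])
  qed
qed

lemma part_b_rv:
  assumes M: "prob_space M" and X[measurable]: "X \<in> borel_measurable M" and D: "D_minus_rv M X"
    and nc: "\<not> (\<exists>c. AE \<omega> in M. X \<omega> = c)"
  shows "(\<integral>\<^sup>+ \<omega>. ennreal \<bar>X \<omega>\<bar> \<partial>M) = \<infinity>"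
proof (rule ccontr)
  assume fin: "(\<integral>\<^sup>+ \<omega>. ennreal \<bar>X \<omega>\<bar> \<partial>M) \<noteq> \<infinity>"
  let ?\<mu> = "distr M borel X"
  have "(\<integral>\<^sup>+x. ennreal (norm x) \<partial>?\<mu>) = (\<integral>\<^sup>+ \<omega>. ennreal \<bar>X \<omega>\<bar> \<partial>M)"
    by (subst nn_integral_distr) auto
  then have "(\<integral>\<^sup>+x. ennreal (norm x) \<partial>?\<mu>) < \<infinity>" using fin by (simp add: less_top)
  then have int: "integrable ?\<mu> (\<lambda>x. x)" by (intro integrableI_bounded) auto
  have "AE x in ?\<mu>. x = (\<integral>x. x \<partial>?\<mu>)"
    by (rule part_b_dist[OF _ int]) (use D in \<open>simp add: D_minus_rv_def\<close>)
  then have "AE \<omega> in M. X \<omega> = (\<integral>x. x \<partial>?\<mu>)"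
    by (subst (asm) AE_distr_iff) auto
  then show False using nc by blast
qed

theorem theorem2:
  fixes M :: "'a measure"
  assumes "prob_space M"
  shows
   "(\<forall>(\<mu>s :: nat \<Rightarrow> real measure) (\<mu> :: real measure).
       (\<forall>n. D_minus (\<mu>s n)) \<and> real_distribution \<mu> \<and> weak_conv_m \<mu>s \<mu> \<longrightarrow> D_minus \<mu>)
  \<and> (\<forall>X. X \<in> borel_measurable M \<and> D_minus_rv M X \<and> \<not> (\<exists>c. AE \<omega> in M. X \<omega> = c)
        \<longrightarrow> (\<integral>\<^sup>+ \<omega>. ennreal \<bar>X \<omega>\<bar> \<partial>M) = \<infinity>)
  \<and> (\<forall>X (a::real) (b::real). X \<in> borel_measurable M \<and> D_minus_rv M X \<and> 0 < a
        \<longrightarrow> D_minus_rv M (\<lambda>\<omega>. a * X \<omega> + b))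
  \<and> (\<forall>X Y. X \<in> borel_measurable M \<and> Y \<in> borel_measurable M \<and> D_minus_rv M X \<and> D_minus_rv M Y
        \<and> prob_space.indep_var M borel X borel Y
        \<longrightarrow> D_minus_rv M (\<lambda>\<omega>. X \<omega> + Y \<omega>))
  \<and> (\<forall>X Y. X \<in> borel_measurable M \<and> Y \<in> borel_measurable M \<and> D_minus_rv M X \<and> D_minus_rv M Y
        \<and> prob_space.indep_var M borel X borel Y
        \<longrightarrow> D_minus_rv M (\<lambda>\<omega>. max (X \<omega>) (Y \<omega>)))
  \<and> (\<forall>X (\<phi>::real \<Rightarrow> real). X \<in> borel_measurable M \<and> D_minus_rv M X \<and> mono \<phi> \<and> convex_on UNIV \<phi>
        \<longrightarrow> D_minus_rv M (\<lambda>\<omega>. \<phi> (X \<omega>)))"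
  using part_a part_b_rv[OF assms] part_c_rv part_d_rv[OF assms] part_e_rv[OF assms] part_f_rv
  by blast

end
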